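(* Let $p$ be a prime and $G$ a $p$-group containing a normal abelian subgroup $A$ of finite index. Assume that $A$ contains a $G$-invariant subgroup $C$ such that $A/C$ is a divisible Chernikov group. If $G$ has no proper contranormal subgroups, then $[G,A]\le C$.
   Context: A subgroup $H$ of $G$ is contranormal in $G$ if its normal closure $H^G$ equals $G$; it is proper if $H\ne G$. *)

theory Defs
  imports "HOL-Algebra.Algebra" "HOL-Computational_Algebra.Primes"
begin

definition p_group :: "('a, 'b) monoid_scheme \<Rightarrow> nat \<Rightarrow> bool" where
  "p_group G p \<longleftrightarrow> group G \<and> (\<forall>x\<in>carrier G. \<exists>n::nat. x [^]\<^bsub>G\<^esub> (p ^ n) = \<one>\<^bsub>G\<^esub>)"

definition normal_closure :: "('a, 'b) monoid_scheme \<Rightarrow> 'a set \<Rightarrow> 'a set" where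
  "normal_closure G H =
     generate G (\<Union>g\<in>carrier G. \<Union>h\<in>H. {g \<otimes>\<^bsub>G\<^esub> h \<otimes>\<^bsub>G\<^esub> inv\<^bsub>G\<^esub> g})"

definition contranormal :: "('a, 'b) monoid_scheme \<Rightarrow> 'a set \<Rightarrow> bool" where
  "contranormal G H \<longleftrightarrow> subgroup H G \<and> normal_closure G H = carrier G"

definition commutator_subgroup :: "('a, 'b) monoid_scheme \<Rightarrow> 'a set \<Rightarrow> 'a set \<Rightarrow> 'a set" where
  "commutator_subgroup G S T =
     generate G (\<Union>x\<in>S. \<Union>y\<in>T.
        {(inv\<^bsub>G\<^esub> x) \<otimes>\<^bsub>G\<^esub> (inv\<^bsub>G\<^esub> y) \<otimes>\<^bsub>G\<^esub> x \<otimes>\<^bsub>G\<^esub> y})"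

definition divisible_group :: "('a, 'b) monoid_scheme \<Rightarrow> bool" where
  "divisible_group H \<longleftrightarrow>
     (\<forall>x\<in>carrier H. \<forall>n::nat. n > 0 \<longrightarrow> (\<exists>y\<in>carrier H. y [^]\<^bsub>H\<^esub> n = x))"

definition quasicyclic_subgroup :: "('a, 'b) monoid_scheme \<Rightarrow> 'a set \<Rightarrow> bool" where
  "quasicyclic_subgroup H P \<longleftrightarrow>
     (\<exists>(q::nat) (x::nat \<Rightarrow> 'a). Factorial_Ring.prime q \<and> (\<forall>n. x n \<in> carrier H) \<and>
        x 0 \<noteq> \<one>\<^bsub>H\<^esub> \<and> x 0 [^]\<^bsub>H\<^esub> q = \<one>\<^bsub>H\<^esub> \<and>
        (\<forall>n. x (Suc n) [^]\<^bsub>H\<^esub> q = x n) \<and> P = generate H (range x))"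

definition internal_direct_product :: "('a, 'b) monoid_scheme \<Rightarrow> 'a set \<Rightarrow> 'a set list \<Rightarrow> bool" where
  "internal_direct_product H N Ps \<longleftrightarrow>
     generate H (\<Union>(set Ps)) = N \<and>
     (\<forall>i<length Ps. subgroup (Ps ! i) H \<and> Ps ! i \<lhd> H\<lparr>carrier := N\<rparr> \<and>
        Ps ! i \<inter> generate H (\<Union>j\<in>{j. j < length Ps \<and> j \<noteq> i}. Ps ! j) = {\<one>\<^bsub>H\<^esub>})"

definition chernikov_group :: "('a, 'b) monoid_scheme \<Rightarrow> bool" where
  "chernikov_group H \<longleftrightarrow> group H \<and>
     (\<exists>N Ps. N \<lhd> H \<and> finite (rcosets\<^bsub>H\<^esub> N) \<and>
        (\<forall>P\<in>set Ps. quasicyclic_subgroup H P) \<and> internal_direct_product H N Ps)"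

definition divisible_chernikov_group :: "('a, 'b) monoid_scheme \<Rightarrow> bool" where
  "divisible_chernikov_group H \<longleftrightarrow> chernikov_group H \<and> divisible_group H"

end

theory Submission
  imports Defs
begin



definition cm :: "('a, 'b) monoid_scheme \<Rightarrow> 'a \<Rightarrow> 'a \<Rightarrow> 'a" where
  "cm G x y = inv\<^bsub>G\<^esub> x \<otimes>\<^bsub>G\<^esub> inv\<^bsub>G\<^esub> y \<otimes>\<^bsub>G\<^esub> x \<otimes>\<^bsub>G\<^esub> y"

locale lem26 = group G for G (structure) +
  fixes A C :: "'a set" and p :: nat
  assumes A_normal: "A \<lhd> G"
    and A_cg: "comm_group (G\<lparr>carrier := A\<rparr>)"
    and A_comm: "\<And>x y. x \<in> A \<Longrightarrow> y \<in> A \<Longrightarrow> x \<otimes> y = y \<otimes> x"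
    and fin: "finite (rcosets A)"
    and CA: "C \<subseteq> A"
    and C_normal: "C \<lhd> G"
    and divis: "\<And>y (n::nat). y \<in> A \<Longrightarrow> n > 0 \<Longrightarrow> \<exists>b\<in>A. y \<otimes> inv (b [^] n) \<in> C"
    and pgr: "\<And>x. x \<in> carrier G \<Longrightarrow> \<exists>n. x [^] (p ^ n) = \<one>"
    and ppos: "p > 0"
    and nocontra: "\<And>H. subgroup H G \<Longrightarrow> normal_closure G H = carrier G \<Longrightarrow> H = carrier G"
begin

lemma A_sub: "subgroup A G" by (rule normal_imp_subgroup[OF A_normal])
lemma C_sub: "subgroup C G" by (rule normal_imp_subgroup[OF C_normal])
lemma A_car: "x \<in> A \<Longrightarrow> x \<in> carrier G" by (rule subgroup.mem_carrier[OF A_sub])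
lemma C_car: "x \<in> C \<Longrightarrow> x \<in> carrier G" by (rule subgroup.mem_carrier[OF C_sub])

lemma conjA: "x \<in> carrier G \<Longrightarrow> y \<in> A \<Longrightarrow> inv x \<otimes> y \<otimes> x \<in> A"
  by (rule normal.inv_op_closed1[OF A_normal])
lemma conjC: "x \<in> carrier G \<Longrightarrow> y \<in> C \<Longrightarrow> inv x \<otimes> y \<otimes> x \<in> C"
  by (rule normal.inv_op_closed1[OF C_normal])

lemma A_m: "x \<in> A \<Longrightarrow> y \<in> A \<Longrightarrow> x \<otimes> y \<in> A" by (rule subgroup.m_closed[OF A_sub])
lemma A_inv: "x \<in> A \<Longrightarrow> inv x \<in> A" by (rule subgroup.m_inv_closed[OF A_sub])
lemma C_m: "x \<in> C \<Longrightarrow> y \<in> C \<Longrightarrow> x \<otimes> y \<in> C" by (rule subgroup.m_closed[OF C_sub])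
lemma C_inv: "x \<in> C \<Longrightarrow> inv x \<in> C" by (rule subgroup.m_inv_closed[OF C_sub])

lemma C_pow: "y \<in> C \<Longrightarrow> y [^] (n::nat) \<in> C"
  by (induction n) (auto simp: C_m subgroup.one_closed[OF C_sub])

lemma canc1 [simp]: "x \<in> carrier G \<Longrightarrow> w \<in> carrier G \<Longrightarrow> x \<otimes> (inv x \<otimes> w) = w"
  by (simp add: m_assoc[symmetric])
lemma canc2 [simp]: "x \<in> carrier G \<Longrightarrow> w \<in> carrier G \<Longrightarrow> inv x \<otimes> (x \<otimes> w) = w"
  by (simp add: m_assoc[symmetric])

lemma A_pow: "y \<in> A \<Longrightarrow> y [^] (n::nat) \<in> A"
  by (induction n) (auto simp: A_m subgroup.one_closed[OF A_sub])

lemma cm_alt: "x \<in> carrier G \<Longrightarrow> y \<in> carrier G \<Longrightarrow> cm G x y = (inv x \<otimes> inv y \<otimes> x) \<otimes> y"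
  by (simp add: cm_def)

lemma cm_A: "x \<in> carrier G \<Longrightarrow> y \<in> A \<Longrightarrow> cm G x y \<in> A"
  by (simp add: cm_alt A_car conjA A_inv A_m)

lemma cm_C: "x \<in> carrier G \<Longrightarrow> y \<in> C \<Longrightarrow> cm G x y \<in> C"
  by (simp add: cm_alt C_car conjC C_inv C_m)

lemma cm_mult: assumes x: "x \<in> carrier G" and y: "y \<in> A" and z: "z \<in> A"
  shows "cm G x (y \<otimes> z) = cm G x y \<otimes> cm G x z"
proof -
  define u where "u = inv x \<otimes> inv y \<otimes> x"
  define v where "v = inv x \<otimes> inv z \<otimes> x"
  have uA: "u \<in> A" unfolding u_def using x y by (simp add: conjA A_inv)
  have vA: "v \<in> A" unfolding v_def using x z by (simp add: conjA A_inv)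
  have yc: "y \<in> carrier G" and zc: "z \<in> carrier G" using y z A_car by auto
  have "cm G x (y \<otimes> z) = v \<otimes> u \<otimes> (y \<otimes> z)"
    unfolding cm_def u_def v_def using x yc zc by (simp add: m_assoc inv_mult_group)
  also have "\<dots> = (u \<otimes> y) \<otimes> (v \<otimes> z)"
  proof -
    have "v \<otimes> u \<otimes> (y \<otimes> z) = v \<otimes> ((u \<otimes> y) \<otimes> z)" using uA vA yc zc A_car by (simp add: m_assoc)
    also have "\<dots> = v \<otimes> (z \<otimes> (u \<otimes> y))" using A_comm[of "u \<otimes> y" z] uA y z by (simp add: A_m)
    also have "\<dots> = (v \<otimes> z) \<otimes> (u \<otimes> y)" using uA vA yc zc A_car by (simp add: m_assoc)
    also have "\<dots> = (u \<otimes> y) \<otimes> (v \<otimes> z)" using A_comm[of "v \<otimes> z" "u \<otimes> y"] uA vA y z by (simp add: A_m)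
    finally show ?thesis .
  qed
  also have "\<dots> = cm G x y \<otimes> cm G x z" unfolding cm_alt[OF x yc] cm_alt[OF x zc] u_def v_def ..
  finally show ?thesis .
qed

lemma cm_pow: assumes x: "x \<in> carrier G" and y: "y \<in> A"
  shows "cm G x (y [^] (n::nat)) = (cm G x y) [^] n"
proof (induction n)
  case 0
  then show ?case using x by (simp add: cm_def)
next
  case (Suc n)
  have yn: "y [^] n \<in> A" using y by (rule A_pow) 
  then show ?case using Suc y x cm_mult[OF x yn y] by simp
qed

lemma cm_left: assumes a: "a \<in> A" and t: "t \<in> carrier G" and y: "y \<in> A"
  shows "cm G (a \<otimes> t) y = cm G t y"
proof -
  have ac: "a \<in> carrier G" and yc: "y \<in> carrier G" using a y A_car by auto
  have "cm G (a \<otimes> t) y = inv t \<otimes> (inv a \<otimes> inv y \<otimes> a) \<otimes> t \<otimes> y"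
    unfolding cm_def using ac yc t by (simp add: m_assoc inv_mult_group)
  also have "inv a \<otimes> inv y \<otimes> a = inv y"
  proof -
    have "inv a \<otimes> inv y \<otimes> a = inv y \<otimes> inv a \<otimes> a"
      using A_comm[of "inv a" "inv y"] a y by (simp add: A_inv)
    also have "\<dots> = inv y" using ac yc by (simp add: m_assoc)
    finally show ?thesis .
  qed
  finally show ?thesis by (simp add: cm_def)
qed

end



context lem26 begin

definition rep :: "'a set \<Rightarrow> 'a" where "rep Q = (SOME x. x \<in> Q)"
definition rr :: "'a \<Rightarrow> 'a" where "rr u = rep (A #> u)"
definition TT :: "'a set" where "TT = rep ` (rcosets A)"

lemma rcos_A: "u \<in> carrier G \<Longrightarrow> u \<in> A #> u"
  by (rule rcos_self[OF _ A_sub])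

lemma rcosetsE2: assumes "Q \<in> rcosets A" obtains g where "g \<in> carrier G" "Q = A #> g"
  using assms unfolding RCOSETS_def by blast

lemma A_subset: "A \<subseteq> carrier G" using A_car by blast

lemma rep_in: assumes "Q \<in> rcosets A" shows "rep Q \<in> Q"
proof -
  obtain g where g: "g \<in> carrier G" "Q = A #> g" using assms by (rule rcosetsE2)
  then have "g \<in> Q" using rcos_A by simp
  then show ?thesis unfolding rep_def by (rule someI)
qed

lemma rep_car: assumes "Q \<in> rcosets A" shows "rep Q \<in> carrier G"
proof -
  obtain g where g: "g \<in> carrier G" "Q = A #> g" using assms by (rule rcosetsE2)
  have "Q \<subseteq> carrier G" using g r_coset_subset_G[OF A_subset] by simp
  then show ?thesis using rep_in[OF assms] by blast
qed

lemma rep_coset: assumes "Q \<in> rcosets A" shows "A #> rep Q = Q"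
proof -
  obtain g where g: "g \<in> carrier G" "Q = A #> g" using assms by (rule rcosetsE2)
  show ?thesis using repr_independence[of "rep Q" A g] rep_in[OF assms] g A_sub by simp
qed

lemma coset_in: "u \<in> carrier G \<Longrightarrow> A #> u \<in> rcosets A"
  by (rule rcosetsI[OF A_subset])

lemma rr_car: "u \<in> carrier G \<Longrightarrow> rr u \<in> carrier G"
  unfolding rr_def by (rule rep_car[OF coset_in])

lemma rr_coset: "u \<in> carrier G \<Longrightarrow> A #> rr u = A #> u"
  unfolding rr_def by (rule rep_coset[OF coset_in])

lemma rr_T: "u \<in> carrier G \<Longrightarrow> rr u \<in> TT"
  unfolding rr_def TT_def using coset_in by blast

lemma TT_car: "TT \<subseteq> carrier G"
  unfolding TT_def using rep_car by blast

lemma TT_fin: "finite TT"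
  unfolding TT_def using fin by simp

lemma rr_TT: assumes "x \<in> TT" shows "rr x = x"
proof -
  obtain Q where Q: "Q \<in> rcosets A" "x = rep Q" using assms unfolding TT_def by blast
  show ?thesis unfolding rr_def using rep_coset[OF Q(1)] Q(2) by simp
qed

lemma same_coset: assumes "u \<in> carrier G" "v \<in> carrier G" "u \<otimes> inv v \<in> A"
  shows "A #> u = A #> v"
proof -
  have "u \<in> A #> v" using subgroup.rcos_module_rev[OF A_sub is_group assms(2,1,3)] .
  then show ?thesis using repr_independence[OF _ assms(2) A_sub] by simp
qed

lemma rr_mod: assumes "u \<in> carrier G" shows "u \<otimes> inv (rr u) \<in> A"
proof -
  have "u \<in> A #> rr u" using rr_coset[OF assms] rcos_A[OF assms] by simp
  then show ?thesis using subgroup.rcos_module_imp[OF A_sub is_group rr_car[OF assms]] by blast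
qed

lemma decomp: assumes "u \<in> carrier G" shows "\<exists>a\<in>A. u = a \<otimes> rr u"
proof -
  have "u = (u \<otimes> inv (rr u)) \<otimes> rr u" using assms rr_car[OF assms] by (simp add: m_assoc)
  then show ?thesis using rr_mod[OF assms] by blast
qed

definition Sg :: "'a set" where
  "Sg = (\<lambda>(x,t). x \<otimes> t \<otimes> inv (rr (x \<otimes> t))) ` (TT \<times> (TT \<union> (\<lambda>t. inv t) ` TT))"

lemma Sg_fin: "finite Sg" unfolding Sg_def using TT_fin by simp

lemma TTi_car: "t \<in> TT \<union> (\<lambda>t. inv t) ` TT \<Longrightarrow> t \<in> carrier G"
  using TT_car by auto

lemma Sg_A: "Sg \<subseteq> A"
proof
  fix s assume "s \<in> Sg"
  then obtain z where z: "z \<in> TT \<times> (TT \<union> (\<lambda>t. inv t) ` TT)" "s = (\<lambda>(x,t). x \<otimes> t \<otimes> inv (rr (x \<otimes> t))) z"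
    unfolding Sg_def by (rule imageE)
  obtain x t where zxt: "z = (x, t)" by (cases z)
  have xt: "x \<in> TT" "t \<in> TT \<union> (\<lambda>t. inv t) ` TT" "s = x \<otimes> t \<otimes> inv (rr (x \<otimes> t))"
    using z zxt by auto
  have "x \<otimes> t \<in> carrier G" using xt TT_car TTi_car by blast
  then show "s \<in> A" using rr_mod xt(3) by simp
qed

lemma W_A: "generate G Sg \<subseteq> A"
  by (rule generate_subgroup_incl[OF Sg_A A_sub])

lemma schreier: assumes "u \<in> generate G TT"
  shows "\<forall>x\<in>TT. x \<otimes> u \<otimes> inv (rr (x \<otimes> u)) \<in> generate G Sg"
  using assms
proof (induction rule: generate.induct)
  case one
  show ?case
  proof
    fix x assume x: "x \<in> TT"
    then have xc: "x \<in> carrier G" using TT_car by blast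
    have "x \<otimes> \<one> \<otimes> inv (rr (x \<otimes> \<one>)) = \<one>" using xc rr_TT[OF x] by simp
    then show "x \<otimes> \<one> \<otimes> inv (rr (x \<otimes> \<one>)) \<in> generate G Sg" using generate.one by metis
  qed
next
  case (incl h)
  show ?case
  proof
    fix x assume x: "x \<in> TT"
    have "x \<otimes> h \<otimes> inv (rr (x \<otimes> h)) \<in> Sg" unfolding Sg_def using x incl by (intro image_eqI[where x="(x,h)"]) auto
    then show "x \<otimes> h \<otimes> inv (rr (x \<otimes> h)) \<in> generate G Sg" by (rule generate.incl)
  qed
next
  case (inv h)
  show ?case
  proof
    fix x assume x: "x \<in> TT"
    have "x \<otimes> inv h \<otimes> inv (rr (x \<otimes> inv h)) \<in> Sg" unfolding Sg_def using x inv by (intro image_eqI[where x="(x,inv h)"]) auto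
    then show "x \<otimes> inv h \<otimes> inv (rr (x \<otimes> inv h)) \<in> generate G Sg" by (rule generate.incl)
  qed
next
  case (eng h1 h2)
  have h1c: "h1 \<in> carrier G" using eng(1) generate_in_carrier[OF TT_car] by blast
  have h2c: "h2 \<in> carrier G" using eng(2) generate_in_carrier[OF TT_car] by blast
  show ?case
  proof
    fix x assume x: "x \<in> TT"
    have xc: "x \<in> carrier G" using x TT_car by blast
    define r1 where "r1 = rr (x \<otimes> h1)"
    have r1c: "r1 \<in> carrier G" unfolding r1_def using xc h1c rr_car by simp
    have r1T: "r1 \<in> TT" unfolding r1_def using xc h1c rr_T by simp
    have P1: "x \<otimes> h1 \<otimes> inv r1 \<in> generate G Sg" unfolding r1_def using eng(3) x by blast
    have P2: "r1 \<otimes> h2 \<otimes> inv (rr (r1 \<otimes> h2)) \<in> generate G Sg" using eng(4) r1T by blast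
    have "A #> (r1 \<otimes> h2) = (A #> r1) #> h2" using coset_mult_assoc[OF A_subset r1c h2c] by simp
    also have "\<dots> = (A #> (x \<otimes> h1)) #> h2" unfolding r1_def using rr_coset xc h1c by simp
    also have "\<dots> = A #> (x \<otimes> h1 \<otimes> h2)" using coset_mult_assoc[OF A_subset _ h2c, of "x \<otimes> h1"] xc h1c by simp
    finally have "rr (r1 \<otimes> h2) = rr (x \<otimes> h1 \<otimes> h2)" unfolding rr_def by simp
    then have eq: "(x \<otimes> h1 \<otimes> inv r1) \<otimes> (r1 \<otimes> h2 \<otimes> inv (rr (r1 \<otimes> h2))) = x \<otimes> (h1 \<otimes> h2) \<otimes> inv (rr (x \<otimes> (h1 \<otimes> h2)))"
      using xc h1c h2c r1c rr_car by (simp add: m_assoc)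
    show "x \<otimes> (h1 \<otimes> h2) \<otimes> inv (rr (x \<otimes> (h1 \<otimes> h2))) \<in> generate G Sg"
      using generate.eng[OF P1 P2] eq by simp
  qed
qed

lemma SA_W: assumes "u \<in> generate G TT" "u \<in> A" shows "u \<in> generate G Sg"
proof -
  define x0 where "x0 = rr \<one>"
  have x0T: "x0 \<in> TT" unfolding x0_def using rr_T by simp
  have x0c: "x0 \<in> carrier G" using x0T TT_car by blast
  have uc: "u \<in> carrier G" using assms(2) A_car by blast
  have "inv x0 \<in> A" using rr_mod[of \<one>] x0c unfolding x0_def by simp
  then have x0A: "x0 \<in> A" using A_inv[of "inv x0"] x0c by simp
  have "A #> (x0 \<otimes> u) = A #> \<one>" using same_coset[of "x0 \<otimes> u" \<one>] x0A assms(2) x0c uc by (simp add: A_m)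
  then have "rr (x0 \<otimes> u) = x0" unfolding x0_def rr_def by simp
  then have "x0 \<otimes> u \<otimes> inv x0 \<in> generate G Sg" using schreier[OF assms(1)] x0T by metis
  moreover have "x0 \<otimes> u \<otimes> inv x0 = u" using A_comm[OF x0A assms(2)] x0c uc by (simp add: m_assoc)
  ultimately show ?thesis by simp
qed

lemma pow_up: assumes "x \<in> carrier G" "x [^] (p ^ n) = \<one>" "n \<le> N"
  shows "x [^] (p ^ N) = \<one>"
proof -
  have "p ^ N = p ^ n * p ^ (N - n)" using assms(3) by (simp add: power_add[symmetric])
  then show ?thesis using assms nat_pow_pow[of x "p ^ n" "p ^ (N - n)"] by simp
qed

lemma W_exp: "\<exists>E>0. \<forall>w\<in>generate G Sg. w [^] (E::nat) = \<one>"
proof -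
  define nn where "nn s = (SOME n. s [^] (p ^ n) = \<one>)" for s
  have nn: "s [^] (p ^ nn s) = \<one>" if "s \<in> Sg" for s
  proof -
    have "s \<in> carrier G" using that Sg_A A_car by blast
    then show ?thesis unfolding nn_def by (rule someI_ex[OF pgr])
  qed
  define N where "N = Max (nn ` Sg)"
  have gens: "s [^] (p ^ N) = \<one>" if "s \<in> Sg" for s
  proof -
    have "nn s \<le> N" unfolding N_def using Sg_fin that by simp
    then show ?thesis using pow_up[OF _ nn[OF that]] that Sg_A A_car by blast
  qed
  have "w [^] (p ^ N) = \<one>" if "w \<in> generate G Sg" for w
    using that
  proof (induction rule: generate.induct)
    case one then show ?case by simp
  next
    case (incl h) then show ?case using gens by simp
  next
    case (inv h)
    have "h \<in> carrier G" using inv Sg_A A_car by blast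
    then show ?case using gens[OF inv] by (simp add: nat_pow_inv)
  next
    case (eng h1 h2)
    have h1: "h1 \<in> A" and h2: "h2 \<in> A" using eng(1,2) W_A by auto
    then show ?case using pow_mult_distrib[OF A_comm[OF h1 h2] A_car A_car] eng(3,4) by simp
  qed
  moreover have "p ^ N > 0" using ppos by simp
  ultimately show ?thesis by blast
qed

end



context lem26 begin

interpretation AG: comm_group "G\<lparr>carrier := A\<rparr>" by (rule A_cg)

definition ff :: "'a \<Rightarrow> 'a set \<Rightarrow> 'a" where "ff b Q = inv (rep Q) \<otimes> b \<otimes> rep Q"
definition Nm :: "'a \<Rightarrow> 'a" where "Nm b = finprod (G\<lparr>carrier := A\<rparr>) (ff b) (rcosets A)"
definition PP :: "'a \<Rightarrow> 'a" where "PP b = finprod (G\<lparr>carrier := A\<rparr>) (\<lambda>Q. cm G (rep Q) b) (rcosets A)"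
definition KK :: "'a set" where "KK = commutator_subgroup G (carrier G) A"

lemma KK_gen: "x \<in> carrier G \<Longrightarrow> y \<in> A \<Longrightarrow> cm G x y \<in> KK"
  unfolding KK_def commutator_subgroup_def cm_def by (rule generate.incl) blast

lemma KK_sub: "subgroup KK G"
  unfolding KK_def commutator_subgroup_def
  by (rule generate_is_subgroup) (auto simp: A_car)

lemma ff_A: "b \<in> A \<Longrightarrow> Q \<in> rcosets A \<Longrightarrow> ff b Q \<in> A"
  unfolding ff_def by (rule conjA[OF rep_car])

lemma Nm_A: "b \<in> A \<Longrightarrow> Nm b \<in> A"
proof -
  assume b: "b \<in> A"
  have "ff b \<in> rcosets A \<rightarrow> carrier (G\<lparr>carrier := A\<rparr>)" using ff_A[OF b] by auto
  then show ?thesis unfolding Nm_def using AG.finprod_closed by simp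
qed

lemma finprod_KK: assumes "finite I" "\<And>i. i \<in> I \<Longrightarrow> f i \<in> KK" "\<And>i. i \<in> I \<Longrightarrow> f i \<in> A"
  shows "finprod (G\<lparr>carrier := A\<rparr>) f I \<in> KK"
  using assms
proof (induction I rule: finite_induct)
  case empty
  then show ?case using subgroup.one_closed[OF KK_sub] by simp
next
  case (insert i I)
  have "f \<in> I \<rightarrow> carrier (G\<lparr>carrier := A\<rparr>)" using insert by auto
  then have "finprod (G\<lparr>carrier := A\<rparr>) f (insert i I) = f i \<otimes> finprod (G\<lparr>carrier := A\<rparr>) f I"
    using AG.finprod_insert[of I i f] insert by simp
  then show ?case using insert subgroup.m_closed[OF KK_sub] by simp
qed

lemma PP_KK: "b \<in> A \<Longrightarrow> PP b \<in> KK"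
  unfolding PP_def
  by (rule finprod_KK[OF fin]) (auto intro: KK_gen rep_car cm_A)

lemma n0_pos: "card (rcosets A) > 0"
proof -
  have "A #> \<one> \<in> rcosets A" by (rule coset_in) simp
  then show ?thesis using fin card_gt_0_iff by blast
qed

lemma Nm_PP: assumes b: "b \<in> A" shows "b [^] card (rcosets A) = Nm b \<otimes> PP b"
proof -
  have bc: "b \<in> carrier G" using b A_car by blast
  have f1: "ff b \<in> rcosets A \<rightarrow> carrier (G\<lparr>carrier := A\<rparr>)" using ff_A[OF b] by auto
  have f2: "(\<lambda>Q. cm G (rep Q) b) \<in> rcosets A \<rightarrow> carrier (G\<lparr>carrier := A\<rparr>)" using cm_A rep_car b by auto
  have eq: "ff b Q \<otimes> cm G (rep Q) b = b" if "Q \<in> rcosets A" for Q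
    using rep_car[OF that] bc unfolding ff_def cm_def by (simp add: m_assoc)
  have "b [^] card (rcosets A) = b [^]\<^bsub>G\<lparr>carrier := A\<rparr>\<^esub> card (rcosets A)"
    by (rule nat_pow_consistent)
  also have "\<dots> = finprod (G\<lparr>carrier := A\<rparr>) (\<lambda>Q. b) (rcosets A)"
    using AG.finprod_const[of b "rcosets A"] b by simp
  also have "\<dots> = finprod (G\<lparr>carrier := A\<rparr>) (\<lambda>Q. ff b Q \<otimes>\<^bsub>G\<lparr>carrier := A\<rparr>\<^esub> cm G (rep Q) b) (rcosets A)"
    using eq b by (intro AG.finprod_cong') auto
  also have "\<dots> = Nm b \<otimes> PP b"
    unfolding Nm_def PP_def using AG.finprod_multf[OF f1 f2] by simp
  finally show ?thesis .
qed

lemma conj_finprod: assumes g: "g \<in> carrier G" and "finite I" "\<And>i. i \<in> I \<Longrightarrow> f i \<in> A"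
  shows "inv g \<otimes> finprod (G\<lparr>carrier := A\<rparr>) f I \<otimes> g = finprod (G\<lparr>carrier := A\<rparr>) (\<lambda>i. inv g \<otimes> f i \<otimes> g) I"
  using assms(2,3)
proof (induction I rule: finite_induct)
  case empty
  then show ?case using g by simp
next
  case (insert i I)
  have f1: "f \<in> I \<rightarrow> carrier (G\<lparr>carrier := A\<rparr>)" using insert by auto
  have f2: "(\<lambda>i. inv g \<otimes> f i \<otimes> g) \<in> I \<rightarrow> carrier (G\<lparr>carrier := A\<rparr>)" using insert g conjA by auto
  have fi: "f i \<in> A" using insert by simp
  have P: "finprod (G\<lparr>carrier := A\<rparr>) f I \<in> A" using AG.finprod_closed[OF f1] by simp
  have "inv g \<otimes> finprod (G\<lparr>carrier := A\<rparr>) f (insert i I) \<otimes> g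
      = inv g \<otimes> (f i \<otimes> finprod (G\<lparr>carrier := A\<rparr>) f I) \<otimes> g"
    using AG.finprod_insert[of I i f] insert f1 by simp
  also have "\<dots> = (inv g \<otimes> f i \<otimes> g) \<otimes> (inv g \<otimes> finprod (G\<lparr>carrier := A\<rparr>) f I \<otimes> g)"
    using g fi P A_car by (simp add: m_assoc)
  also have "\<dots> = (inv g \<otimes> f i \<otimes> g) \<otimes> finprod (G\<lparr>carrier := A\<rparr>) (\<lambda>i. inv g \<otimes> f i \<otimes> g) I"
    using insert by simp
  also have "\<dots> = finprod (G\<lparr>carrier := A\<rparr>) (\<lambda>i. inv g \<otimes> f i \<otimes> g) (insert i I)"
    using AG.finprod_insert[of I i "\<lambda>i. inv g \<otimes> f i \<otimes> g"] insert f2 g fi conjA by simp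
  finally show ?case .
qed

lemma conj_comm: assumes a: "a \<in> A" and b: "b \<in> A" shows "inv a \<otimes> b \<otimes> a = b"
proof -
  have ac: "a \<in> carrier G" and bc: "b \<in> carrier G" using a b A_car by auto
  have "inv a \<otimes> b \<otimes> a = inv a \<otimes> (a \<otimes> b)" using A_comm[OF b a] ac bc by (simp add: m_assoc)
  then show ?thesis using ac bc by simp
qed

lemma conj_indep: assumes x: "x \<in> carrier G" and y: "y \<in> carrier G" and eq: "A #> x = A #> y" and b: "b \<in> A"
  shows "inv x \<otimes> b \<otimes> x = inv y \<otimes> b \<otimes> y"
proof -
  have "x \<in> A #> y" using eq rcos_A[OF x] by simp
  then have a: "x \<otimes> inv y \<in> A" using subgroup.rcos_module_imp[OF A_sub is_group y] by blast
  define a where "a = x \<otimes> inv y"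
  have ac: "a \<in> carrier G" unfolding a_def using x y by simp
  have xa: "x = a \<otimes> y" unfolding a_def using x y by (simp add: m_assoc)
  have "inv x \<otimes> b \<otimes> x = inv y \<otimes> (inv a \<otimes> b \<otimes> a) \<otimes> y"
    unfolding xa using ac y b A_car by (simp add: m_assoc inv_mult_group)
  also have "inv a \<otimes> b \<otimes> a = b" using conj_comm a b unfolding a_def by blast
  finally show ?thesis .
qed

lemma rcos_shift: assumes g: "g \<in> carrier G" and Q: "Q \<in> rcosets A"
  shows "Q #> g \<in> rcosets A"
proof -
  obtain x where x: "x \<in> carrier G" "Q = A #> x" using Q by (rule rcosetsE2)
  have "Q #> g = A #> (x \<otimes> g)" using x coset_mult_assoc[OF A_subset x(1) g] by simp
  then show ?thesis using coset_in x g by simp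
qed

lemma rcos_shift_back: assumes g: "g \<in> carrier G" and Q: "Q \<in> rcosets A"
  shows "(Q #> g) #> inv g = Q"
proof -
  obtain x where x: "x \<in> carrier G" "Q = A #> x" using Q by (rule rcosetsE2)
  have "(Q #> g) #> inv g = A #> (x \<otimes> g \<otimes> inv g)"
    using x g coset_mult_assoc[OF A_subset] by simp
  then show ?thesis using x g by (simp add: m_assoc)
qed

lemma shift_image: assumes g: "g \<in> carrier G" shows "(\<lambda>Q. Q #> g) ` (rcosets A) = rcosets A"
proof
  show "(\<lambda>Q. Q #> g) ` (rcosets A) \<subseteq> rcosets A" using rcos_shift[OF g] by blast
next
  show "rcosets A \<subseteq> (\<lambda>Q. Q #> g) ` (rcosets A)"
  proof
    fix Q assume Q: "Q \<in> rcosets A"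
    have "Q #> inv g \<in> rcosets A" using rcos_shift[OF _ Q] g by simp
    moreover have "Q = (Q #> inv g) #> g" using rcos_shift_back[of "inv g" Q] g Q by simp
    ultimately show "Q \<in> (\<lambda>Q. Q #> g) ` (rcosets A)" by blast
  qed
qed

lemma shift_inj: assumes g: "g \<in> carrier G" shows "inj_on (\<lambda>Q. Q #> g) (rcosets A)"
proof (rule inj_onI)
  fix Q Q' assume Q: "Q \<in> rcosets A" and Q': "Q' \<in> rcosets A" and e: "Q #> g = Q' #> g"
  have "Q = (Q #> g) #> inv g" using rcos_shift_back[OF g Q] by simp
  also have "\<dots> = (Q' #> g) #> inv g" using e by simp
  also have "\<dots> = Q'" using rcos_shift_back[OF g Q'] .
  finally show "Q = Q'" .
qed

lemma ff_shift: assumes g: "g \<in> carrier G" and Q: "Q \<in> rcosets A" and b: "b \<in> A"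
  shows "inv g \<otimes> ff b Q \<otimes> g = ff b (Q #> g)"
proof -
  have rc: "rep Q \<in> carrier G" using rep_car[OF Q] .
  have Qg: "Q #> g \<in> rcosets A" using rcos_shift[OF g Q] .
  have r2: "rep (Q #> g) \<in> carrier G" using rep_car[OF Qg] .
  have "A #> (rep Q \<otimes> g) = (A #> rep Q) #> g" using coset_mult_assoc[OF A_subset rc g] by simp
  also have "\<dots> = Q #> g" using rep_coset[OF Q] by simp
  also have "\<dots> = A #> rep (Q #> g)" using rep_coset[OF Qg] by simp
  finally have ceq: "A #> (rep Q \<otimes> g) = A #> rep (Q #> g)" .
  have "inv g \<otimes> ff b Q \<otimes> g = inv (rep Q \<otimes> g) \<otimes> b \<otimes> (rep Q \<otimes> g)"
    unfolding ff_def using g rc b A_car by (simp add: m_assoc inv_mult_group)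
  also have "\<dots> = ff b (Q #> g)"
    unfolding ff_def using conj_indep[OF _ r2 ceq b] rc g by simp
  finally show ?thesis .
qed

lemma Nm_conj: assumes g: "g \<in> carrier G" and b: "b \<in> A"
  shows "inv g \<otimes> Nm b \<otimes> g = Nm b"
proof -
  have "inv g \<otimes> Nm b \<otimes> g = finprod (G\<lparr>carrier := A\<rparr>) (\<lambda>Q. inv g \<otimes> ff b Q \<otimes> g) (rcosets A)"
    unfolding Nm_def using conj_finprod[OF g fin] ff_A[OF b] by blast
  also have "\<dots> = finprod (G\<lparr>carrier := A\<rparr>) (\<lambda>Q. ff b (Q #> g)) (rcosets A)"
    using ff_shift[OF g _ b] by (intro AG.finprod_cong') (auto intro: ff_A[OF b] rcos_shift[OF g])
  also have "\<dots> = finprod (G\<lparr>carrier := A\<rparr>) (ff b) ((\<lambda>Q. Q #> g) ` (rcosets A))"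
  proof -
    have "ff b \<in> (\<lambda>Q. Q #> g) ` (rcosets A) \<rightarrow> carrier (G\<lparr>carrier := A\<rparr>)"
      using shift_image[OF g] ff_A[OF b] by auto
    then show ?thesis using AG.finprod_reindex[OF _ shift_inj[OF g]] by simp
  qed
  also have "\<dots> = Nm b" unfolding Nm_def shift_image[OF g] ..
  finally show ?thesis .
qed

end



context lem26 begin

definition MM :: "'a set" where "MM = {m \<in> A. \<forall>g\<in>carrier G. cm G g m \<in> C}"

lemma cm_one: "g \<in> carrier G \<Longrightarrow> cm G g \<one> = \<one>" by (simp add: cm_def)

lemma cm_inv: assumes g: "g \<in> carrier G" and m: "m \<in> A" shows "cm G g (inv m) = inv (cm G g m)"
proof -
  have "cm G g (inv m) \<otimes> cm G g m = \<one>"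
    using cm_mult[OF g A_inv[OF m] m] m g A_car cm_one by simp
  then show ?thesis using g m A_car cm_A A_inv by (simp add: inv_char group.inv_equality)
qed

lemma MM_sub: "subgroup MM G"
proof (rule subgroupI)
  show "MM \<subseteq> carrier G" unfolding MM_def using A_car by blast
  show "MM \<noteq> {}"
  proof -
    have "\<one> \<in> MM" unfolding MM_def using cm_one subgroup.one_closed[OF A_sub] subgroup.one_closed[OF C_sub] by simp
    then show ?thesis by blast
  qed
next
  fix m assume m: "m \<in> MM"
  then show "inv m \<in> MM" unfolding MM_def using cm_inv A_inv C_inv by auto
next
  fix m1 m2 assume "m1 \<in> MM" "m2 \<in> MM"
  then show "m1 \<otimes> m2 \<in> MM" unfolding MM_def using cm_mult A_m C_m by auto
qed

lemma MM_normal: "MM \<lhd> G"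
proof -
  have "x \<otimes> h \<otimes> inv x \<in> MM" if x: "x \<in> carrier G" and h: "h \<in> MM" for x h
  proof -
    have hA: "h \<in> A" and hC: "\<forall>g\<in>carrier G. cm G g h \<in> C" using h unfolding MM_def by auto
    have hc: "h \<in> carrier G" using hA A_car by blast
    have A1: "x \<otimes> h \<otimes> inv x \<in> A" using conjA[of "inv x" h] x hA by simp
    have "cm G g (x \<otimes> h \<otimes> inv x) \<in> C" if g: "g \<in> carrier G" for g
    proof -
      define k where "k = inv x \<otimes> g \<otimes> x"
      have kc: "k \<in> carrier G" unfolding k_def using x g by simp
      have "cm G g (x \<otimes> h \<otimes> inv x) = x \<otimes> cm G k h \<otimes> inv x"
        unfolding cm_def k_def using x g hc by (simp add: m_assoc inv_mult_group)
      moreover have "x \<otimes> cm G k h \<otimes> inv x \<in> C"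
        using conjC[of "inv x" "cm G k h"] hC kc x by simp
      ultimately show ?thesis by simp
    qed
    then show ?thesis unfolding MM_def using A1 by blast
  qed
  then show ?thesis using MM_sub normal_inv_iff by blast
qed

lemma CM: "C \<subseteq> MM" unfolding MM_def using CA cm_C by blast

lemma NmM: "b \<in> A \<Longrightarrow> Nm b \<in> MM"
proof -
  assume b: "b \<in> A"
  have N: "Nm b \<in> A" using Nm_A[OF b] .
  have Nc: "Nm b \<in> carrier G" using N A_car by blast
  have "cm G g (Nm b) = \<one>" if g: "g \<in> carrier G" for g
  proof -
    have "inv g \<otimes> inv (Nm b) \<otimes> g = inv (inv g \<otimes> Nm b \<otimes> g)" using g Nc by (simp add: m_assoc inv_mult_group)
    also have "\<dots> = inv (Nm b)" using Nm_conj[OF g b] by simp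
    finally show ?thesis unfolding cm_def using Nc g by simp
  qed
  then show ?thesis unfolding MM_def using N subgroup.one_closed[OF C_sub] by simp
qed

definition SS :: "'a set" where "SS = generate G TT"
definition HH :: "'a set" where "HH = MM <#> SS"

lemma SS_sub: "subgroup SS G" unfolding SS_def by (rule generate_is_subgroup[OF TT_car])

lemma HH_sub: "subgroup HH G"
proof -
  have "second_isomorphism_grp MM G SS"
    unfolding second_isomorphism_grp_def second_isomorphism_grp_axioms_def
    using MM_normal SS_sub by simp
  then show ?thesis unfolding HH_def by (rule second_isomorphism_grp.normal_set_mult_subgroup)
qed

lemma MM_HH: "m \<in> MM \<Longrightarrow> m \<in> HH"
proof -
  assume m: "m \<in> MM"
  have "m = m \<otimes> \<one>" using m MM_sub subgroup.mem_carrier by force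
  moreover have "\<one> \<in> SS" using subgroup.one_closed[OF SS_sub] .
  ultimately show ?thesis unfolding HH_def set_mult_def using m by blast
qed

lemma SS_HH: "s \<in> SS \<Longrightarrow> s \<in> HH"
proof -
  assume s: "s \<in> SS"
  have "s = \<one> \<otimes> s" using s SS_sub subgroup.mem_carrier by force
  moreover have "\<one> \<in> MM" using subgroup.one_closed[OF MM_sub] .
  ultimately show ?thesis unfolding HH_def set_mult_def using s by blast
qed

lemma HH_all: "HH = carrier G"
proof (rule nocontra[OF HH_sub])
  define Lc where "Lc = normal_closure G HH"
  define cs where "cs = (\<Union>g\<in>carrier G. \<Union>h\<in>HH. {g \<otimes> h \<otimes> inv g})"
  have Lc_def2: "Lc = generate G cs" unfolding Lc_def cs_def normal_closure_def ..
  have HHc: "HH \<subseteq> carrier G" using subgroup.subset[OF HH_sub] .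
  have cs_car: "cs \<subseteq> carrier G" unfolding cs_def using HHc by auto
  have Lsub: "subgroup Lc G" unfolding Lc_def2 by (rule generate_is_subgroup[OF cs_car])
  have conjL: "g \<otimes> h \<otimes> inv g \<in> Lc" if "g \<in> carrier G" "h \<in> HH" for g h
    unfolding Lc_def2 by (rule generate.incl) (unfold cs_def, use that in blast)
  have HL: "h \<in> Lc" if "h \<in> HH" for h
    using conjL[of \<one> h] that HHc by auto
  have cmL: "cm G x y \<in> Lc" if x: "x \<in> carrier G" and y: "y \<in> A" for x y
  proof -
    obtain a where a: "a \<in> A" "x = a \<otimes> rr x" using decomp[OF x] by blast
    define t where "t = rr x"
    have tc: "t \<in> carrier G" unfolding t_def using rr_car[OF x] .
    have tS: "t \<in> SS" unfolding t_def SS_def using rr_T[OF x] by (rule generate.incl)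
    have yc: "y \<in> carrier G" using y A_car by blast
    have e1: "cm G x y = cm G t y" using cm_left[OF a(1) tc y] a(2) unfolding t_def by simp
    have e2: "cm G t y = inv t \<otimes> (inv y \<otimes> t \<otimes> inv (inv y))" unfolding cm_def using tc yc by (simp add: m_assoc)
    have "inv t \<in> Lc" using subgroup.m_inv_closed[OF Lsub HL[OF SS_HH[OF tS]]] .
    moreover have "inv y \<otimes> t \<otimes> inv (inv y) \<in> Lc" using conjL[of "inv y" t] yc SS_HH[OF tS] by simp
    ultimately show ?thesis using e1 e2 subgroup.m_closed[OF Lsub] by simp
  qed
  have KL: "KK \<subseteq> Lc" unfolding KK_def commutator_subgroup_def
    by (rule generate_subgroup_incl[OF _ Lsub]) (use cmL in \<open>auto simp: cm_def\<close>)
  have AL: "a \<in> Lc" if a: "a \<in> A" for a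
  proof -
    obtain b where b: "b \<in> A" "a \<otimes> inv (b [^] card (rcosets A)) \<in> C" using divis[of a "card (rcosets A)"] a n0_pos by blast
    define c where "c = a \<otimes> inv (b [^] card (rcosets A))"
    have ac: "a \<in> carrier G" using a A_car by blast
    have bc: "b \<in> carrier G" using b A_car by blast
    have "a = c \<otimes> b [^] card (rcosets A)" unfolding c_def using ac bc by (simp add: m_assoc)
    also have "\<dots> = c \<otimes> (Nm b \<otimes> PP b)" using Nm_PP[OF b(1)] by simp
    finally have ae: "a = c \<otimes> (Nm b \<otimes> PP b)" .
    have "c \<in> Lc" using b(2) CM MM_HH HL unfolding c_def by blast
    moreover have "Nm b \<in> Lc" using NmM[OF b(1)] MM_HH HL by blast
    moreover have "PP b \<in> Lc" using PP_KK[OF b(1)] KL by blast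
    ultimately show ?thesis using ae subgroup.m_closed[OF Lsub] by metis
  qed
  show "normal_closure G HH = carrier G"
  proof
    show "normal_closure G HH \<subseteq> carrier G" unfolding normal_closure_def using generate_incl[OF cs_car] cs_def by simp
    show "carrier G \<subseteq> normal_closure G HH"
    proof
      fix x assume x: "x \<in> carrier G"
      obtain a where a: "a \<in> A" "x = a \<otimes> rr x" using decomp[OF x] by blast
      have "rr x \<in> Lc" using HL[OF SS_HH] rr_T[OF x] unfolding SS_def by (blast intro: generate.incl)
      then show "x \<in> normal_closure G HH" using AL[OF a(1)] a(2) subgroup.m_closed[OF Lsub] unfolding Lc_def by metis
    qed
  qed
qed

lemma main: "commutator_subgroup G (carrier G) A \<subseteq> C"
proof -
  obtain E where E: "E > 0" "\<forall>w\<in>generate G Sg. w [^] (E::nat) = \<one>" using W_exp by blast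
  have SAW: "f [^] E = \<one>" if "f \<in> SS" "f \<in> A" for f
    using E(2) SA_W that unfolding SS_def by blast
  have HHe: "\<exists>m\<in>MM. \<exists>s\<in>SS. x = m \<otimes> s" if "x \<in> carrier G" for x
    using that HH_all unfolding HH_def set_mult_def by blast
  have gen: "cm G x y \<in> C" if x: "x \<in> carrier G" and y: "y \<in> A" for x y
  proof -
    obtain b where b: "b \<in> A" "y \<otimes> inv (b [^] E) \<in> C" using divis[OF y E(1)] by blast
    define c0 where "c0 = y \<otimes> inv (b [^] E)"
    have yc: "y \<in> carrier G" using y A_car by blast
    have bc: "b \<in> carrier G" using b A_car by blast
    have c0A: "c0 \<in> A" using b(2) CA unfolding c0_def by blast
    have ye: "y = c0 \<otimes> b [^] E" unfolding c0_def using yc bc by (simp add: m_assoc)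
    have e1: "cm G x y = cm G x c0 \<otimes> (cm G x b) [^] E"
      unfolding ye using cm_mult[OF x c0A A_pow[OF b(1)]] cm_pow[OF x b(1)] by simp
    obtain m s where ms: "m \<in> MM" "s \<in> SS" "b = m \<otimes> s" using HHe bc by blast
    have mA: "m \<in> A" using ms(1) unfolding MM_def by blast
    have mc: "m \<in> carrier G" using mA A_car by blast
    have sc: "s \<in> carrier G" using subgroup.mem_carrier[OF SS_sub ms(2)] .
    have sA: "s \<in> A"
    proof -
      have "s = inv m \<otimes> b" using ms(3) mc sc by simp
      then show ?thesis using A_m[OF A_inv[OF mA] b(1)] by simp
    qed
    obtain m' s' where ms': "m' \<in> MM" "s' \<in> SS" "x = m' \<otimes> s'" using HHe x by blast
    have m'A: "m' \<in> A" using ms'(1) unfolding MM_def by blast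
    have s'c: "s' \<in> carrier G" using subgroup.mem_carrier[OF SS_sub ms'(2)] .
    have c1: "cm G x m \<in> C" using ms(1) x unfolding MM_def by blast
    have e2: "cm G x b = cm G x m \<otimes> cm G s' s" using cm_mult[OF x mA sA] ms(3) ms'(3) cm_left[OF m'A s'c sA] by simp
    have fS: "cm G s' s \<in> SS" unfolding cm_def
      using ms'(2) ms(2) SS_sub by (simp add: subgroup.m_closed subgroup.m_inv_closed)
    have fA: "cm G s' s \<in> A" using cm_A[OF s'c sA] .
    have "(cm G x b) [^] E = (cm G x m) [^] E \<otimes> (cm G s' s) [^] E"
      unfolding e2 using pow_mult_distrib[OF A_comm[OF CA[THEN subsetD, OF c1] fA]] c1 fA A_car C_car by simp
    also have "\<dots> = (cm G x m) [^] E" using SAW[OF fS fA] c1 C_car by simp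
    finally have "(cm G x b) [^] E \<in> C" using C_pow[OF c1] by simp
    moreover have "cm G x c0 \<in> C" using cm_C[OF x] b(2) unfolding c0_def by blast
    ultimately show ?thesis using e1 C_m by simp
  qed
  show ?thesis unfolding commutator_subgroup_def
    by (rule generate_subgroup_incl[OF _ C_sub]) (use gen in \<open>auto simp: cm_def\<close>)
qed

end



lemma divis_lemma:
  fixes G :: "('a, 'b) monoid_scheme" and A C :: "'a set"
  assumes grp: "group G" and An: "A \<lhd> G" and Cn: "C \<lhd> G" and CA: "C \<subseteq> A"
    and dv: "divisible_group ((G\<lparr>carrier := A\<rparr>) Mod C)"
    and y: "y \<in> A" and n: "(n::nat) > 0"
  shows "\<exists>b\<in>A. y \<otimes>\<^bsub>G\<^esub> inv\<^bsub>G\<^esub> (b [^]\<^bsub>G\<^esub> n) \<in> C"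
proof -
  interpret group G by (rule grp)
  have As: "subgroup A G" by (rule normal_imp_subgroup[OF An])
  have Cs: "subgroup C G" by (rule normal_imp_subgroup[OF Cn])
  have Acar: "A \<subseteq> carrier G" using subgroup.subset[OF As] .
  let ?GA = "G\<lparr>carrier := A\<rparr>"
  have gGA: "group ?GA" by (rule subgroup_imp_group[OF As])
  have CnA: "C \<lhd> ?GA" by (rule normal_restrict_supergroup[OF As Cn CA])
  have hom: "(\<lambda>a. C #>\<^bsub>?GA\<^esub> a) \<in> hom ?GA (?GA Mod C)" by (rule normal.r_coset_hom_Mod[OF CnA])
  have gQ: "group (?GA Mod C)" by (rule normal.factorgroup_is_group[OF CnA])
  have gh: "group_hom ?GA (?GA Mod C) (\<lambda>a. C #>\<^bsub>G\<^esub> a)"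
    using gGA gQ hom unfolding group_hom_def group_hom_axioms_def by simp
  have rc: "\<And>a. C #>\<^bsub>?GA\<^esub> a = C #>\<^bsub>G\<^esub> a" unfolding r_coset_def by simp
  have "C #>\<^bsub>?GA\<^esub> y \<in> carrier (?GA Mod C)"
    unfolding FactGroup_def RCOSETS_def using y by auto
  then obtain Y where Y: "Y \<in> carrier (?GA Mod C)" "Y [^]\<^bsub>?GA Mod C\<^esub> n = C #>\<^bsub>?GA\<^esub> y"
    using dv n unfolding divisible_group_def by blast
  obtain b where b: "b \<in> A" "Y = C #>\<^bsub>?GA\<^esub> b"
    using Y(1) unfolding FactGroup_def RCOSETS_def by auto
  have "C #>\<^bsub>?GA\<^esub> (b [^]\<^bsub>?GA\<^esub> n) = Y [^]\<^bsub>?GA Mod C\<^esub> n"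
    using group_hom.hom_nat_pow[OF gh, of b n] b by simp
  then have "C #>\<^bsub>G\<^esub> (b [^]\<^bsub>G\<^esub> n) = C #>\<^bsub>G\<^esub> y" using Y(2) rc nat_pow_consistent[of b n A] by simp
  moreover have bnc: "b [^]\<^bsub>G\<^esub> n \<in> carrier G" using b Acar by auto
  moreover have yc: "y \<in> carrier G" using y Acar by auto
  ultimately have "y \<in> C #>\<^bsub>G\<^esub> (b [^]\<^bsub>G\<^esub> n)" using rcos_self[OF yc Cs] by simp
  then have "y \<otimes>\<^bsub>G\<^esub> inv\<^bsub>G\<^esub> (b [^]\<^bsub>G\<^esub> n) \<in> C" using subgroup.rcos_module_imp[OF Cs grp bnc] by blast
  then show ?thesis using b(1) by blast
qed

theorem lemma2p6:
  fixes G :: "('a, 'b) monoid_scheme" and p :: nat and A C :: "'a set"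
  assumes "group G"
    and "Factorial_Ring.prime p"
    and "p_group G p"
    and "A \<lhd> G"
    and "comm_group (G\<lparr>carrier := A\<rparr>)"
    and "finite (rcosets\<^bsub>G\<^esub> A)"
    and "C \<subseteq> A"
    and "C \<lhd> G"
    and "divisible_chernikov_group ((G\<lparr>carrier := A\<rparr>) Mod C)"
    and "\<forall>H. contranormal G H \<longrightarrow> H = carrier G"
  shows "commutator_subgroup G (carrier G) A \<subseteq> C"
proof -
  interpret group G by (rule assms(1))
  have loc: "lem26 G A C p"
  proof (rule lem26.intro[OF assms(1)], rule lem26_axioms.intro)
    show "A \<lhd> G" by (rule assms(4))
    show "comm_group (G\<lparr>carrier := A\<rparr>)" by (rule assms(5))
    show "\<And>x y. x \<in> A \<Longrightarrow> y \<in> A \<Longrightarrow> x \<otimes>\<^bsub>G\<^esub> y = y \<otimes>\<^bsub>G\<^esub> x"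
      using comm_monoid.m_comm[OF comm_group.axioms(1)[OF assms(5)]] by simp
    show "finite (rcosets\<^bsub>G\<^esub> A)" by (rule assms(6))
    show "C \<subseteq> A" by (rule assms(7))
    show "C \<lhd> G" by (rule assms(8))
    show "\<And>y (n::nat). y \<in> A \<Longrightarrow> n > 0 \<Longrightarrow> \<exists>b\<in>A. y \<otimes>\<^bsub>G\<^esub> inv\<^bsub>G\<^esub> (b [^]\<^bsub>G\<^esub> n) \<in> C"
      using divis_lemma[OF assms(1,4,8,7)] assms(9)
      unfolding divisible_chernikov_group_def by blast
    show "\<And>x. x \<in> carrier G \<Longrightarrow> \<exists>n. x [^]\<^bsub>G\<^esub> (p ^ n) = \<one>\<^bsub>G\<^esub>"
      using assms(3) unfolding p_group_def by blast
    show "p > 0" using assms(2) by (simp add: prime_gt_0_nat)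
    show "\<And>H. subgroup H G \<Longrightarrow> normal_closure G H = carrier G \<Longrightarrow> H = carrier G"
      using assms(10) unfolding contranormal_def by blast
  qed
  show ?thesis by (rule lem26.main[OF loc])
qed



end
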